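(* Consider the following conjunctive hierarchical secret sharing scheme. Setting. Let $\mathcal{P}=\{1,\dots,n\}$ be partitioned into consecutive blocks $\mathcal{P}_\ell=\{N_{\ell-1}+1,\dots,N_\ell\}$, $\ell\in[m]$, where $N_0=0$ and $N_\ell=\sum_{w=1}^{\ell}|\mathcal{P}_w|$, so $\bigcup_{w=1}^{\ell}\mathcal{P}_w=[N_\ell]$. Let $1\le t_1<\dots<t_m$ with $t_\ell\le N_\ell$. The access structure is $\Gamma=\{\mathcal{A}\subseteq\mathcal{P}: |\mathcal{A}\cap(\bigcup_{w=1}^{\ell}\mathcal{P}_w)|\ge t_\ell\text{ for all }\ell\in[m]\}$. Public parameters. A prime $m_0$ and integers $m_1,\dots,m_n$ with $\gcd(m_i,m_j)=1$ for $0\le i<j\le n$, $m_0<m_1<\dots<m_n$, and $km_0<m_i<km_0+m_0^{\theta}$ for all $i\in[n]$, for some reals $k\ge1$, $\theta\in(0,1)$; distinct public functions $h_1,\dots,h_m$ with $h_\ell(x,\ell)\in\mathbb{Z}_{m_i}$ for $x\in\mathbb{Z}_{m_i}$. Share generation. For a secret $s\in\mathbb{Z}_{m_0}$ the dealer chooses $\delta_1,\dots,\delta_{m-1}\in\mathbb{Z}_{m_0}$, sets $\delta_m=(s-\delta_1-\dots-\delta_{m-1})\bmod m_0$, and chooses integers $\alpha_\ell$ with $0\le y_\ell:=\delta_\ell+\alpha_\ell m_0<\prod_{i=1}^{t_\ell}m_i$ for $\ell\in[m]$. It chooses $c_i\in\mathbb{Z}_{m_i}$ for $i\in[N_{m-1}]$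 and gives participant $i$ the share $s_i=c_i$ if $i\in[N_{m-1}]$ and $s_i=y_m\bmod m_i$ if $i\in\{N_{m-1}+1,\dots,N_m\}$. For every $i\in[N_{m-1}]$, with $\ell_1\in[m-1]$ such that $i\in\mathcal{P}_{\ell_1}$, it publishes $w_i^{(\ell)}=(y_\ell-h_\ell(s_i,\ell))\bmod m_i$ for all $\ell\in\{\ell_1,\dots,m\}$. Reconstruction. For $\mathcal{A}\in\Gamma$ and each $\ell\in[m]$, with $\mathcal{A}^{(\ell)}=\mathcal{A}\cap[N_\ell]$, compute for $i\in\mathcal{A}^{(\ell)}$: $s_i^{(\ell)}=h_\ell(s_i,\ell)+w_i^{(\ell)}$ if $\ell\le m-1$, or if $\ell=m$ and $i\le N_{m-1}$; $s_i^{(m)}=s_i$ if $i>N_{m-1}$. Compute $Y_\ell=\left(\sum_{i\in\mathcal{A}^{(\ell)}}\lambda_iM_is_i^{(\ell)}\right)\bmod M$ where $M=\prod_{i\in\mathcal{A}^{(\ell)}}m_i$, $M_i=M/m_i$, $\lambda_i\equiv M_i^{-1}\pmod{m_i}$, and output $(\sum_{\ell=1}^{m}(Y_\ell\bmod m_0))\bmod m_0$. Claim. For every secret $s\in\mathbb{Z}_{m_0}$, every admissible choice of the $\delta_\ell,\alpha_\ell,c_i$, and every $\mathcal{A}\in\Gamma$, one has $Y_\ell=y_\ell$ and $Y_\ell\bmod m_0=\delta_\ell$ for every $\ell\in[m]$, and the reconstruction outputs $s$.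
   Context: $\mathbb{Z}_q=\{0,\dots,q-1\}$, $x\bmod q$ is the least nonnegative residue, $[n]=\{1,\dots,n\}$. The functions $h_\ell$ are intended to be one-way functions; no property beyond being fixed public maps is used. *)

theory Defs
  imports "HOL-Number_Theory.Number_Theory" Complex_Main
begin

text \<open>Levels are indexed by l in {1..m}; the blocks are
  P_l = {N(l-1)+1..N l} with N 0 = 0; participants are {1..N m}.
  Moduli m_0,...,m_n are given by mm :: nat => int (mm 0 = m_0).
  The public function h_l applied to (x,l) is written h l x l.\<close>

definition Gamma :: "nat \<Rightarrow> (nat \<Rightarrow> nat) \<Rightarrow> (nat \<Rightarrow> nat) \<Rightarrow> nat set set" where
  "Gamma m N t = {A. A \<subseteq> {1..N m} \<and> (\<forall>l\<in>{1..m}. card (A \<inter> {1..N l}) \<ge> t l)}"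

definition share :: "nat \<Rightarrow> (nat \<Rightarrow> nat) \<Rightarrow> (nat \<Rightarrow> int) \<Rightarrow> (nat \<Rightarrow> int)
    \<Rightarrow> (nat \<Rightarrow> int) \<Rightarrow> nat \<Rightarrow> int" where
  "share m N mm c y i = (if i \<le> N (m - 1) then c i else y m mod mm i)"

text \<open>Published value w_i^(l) (only used for i in [N_(m-1)] and l at least
  the block index of i).\<close>
definition pubw :: "nat \<Rightarrow> (nat \<Rightarrow> nat) \<Rightarrow> (nat \<Rightarrow> int) \<Rightarrow> (nat \<Rightarrow> int \<Rightarrow> nat \<Rightarrow> int)
    \<Rightarrow> (nat \<Rightarrow> int) \<Rightarrow> (nat \<Rightarrow> int) \<Rightarrow> nat \<Rightarrow> nat \<Rightarrow> int" where
  "pubw m N mm h c y i l = (y l - h l (share m N mm c y i) l) mod mm i"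

definition rshare :: "nat \<Rightarrow> (nat \<Rightarrow> nat) \<Rightarrow> (nat \<Rightarrow> int) \<Rightarrow> (nat \<Rightarrow> int \<Rightarrow> nat \<Rightarrow> int)
    \<Rightarrow> (nat \<Rightarrow> int) \<Rightarrow> (nat \<Rightarrow> int) \<Rightarrow> nat \<Rightarrow> nat \<Rightarrow> int" where
  "rshare m N mm h c y i l =
     (if l \<le> m - 1 \<or> i \<le> N (m - 1)
      then h l (share m N mm c y i) l + pubw m N mm h c y i l
      else share m N mm c y i)"

text \<open>Y_l; lam l i is the chosen inverse lambda_i of M_i modulo m_i at level l.\<close>
definition Yrec :: "nat \<Rightarrow> (nat \<Rightarrow> nat) \<Rightarrow> (nat \<Rightarrow> int) \<Rightarrow> (nat \<Rightarrow> int \<Rightarrow> nat \<Rightarrow> int)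
    \<Rightarrow> (nat \<Rightarrow> int) \<Rightarrow> (nat \<Rightarrow> int) \<Rightarrow> (nat \<Rightarrow> nat \<Rightarrow> int) \<Rightarrow> nat set \<Rightarrow> nat \<Rightarrow> int" where
  "Yrec m N mm h c y lam A l =
     (let Al = A \<inter> {1..N l}; M = (\<Prod>i\<in>Al. mm i) in
      (\<Sum>i\<in>Al. lam l i * (M div mm i) * rshare m N mm h c y i l) mod M)"

definition recon_output :: "nat \<Rightarrow> (nat \<Rightarrow> nat) \<Rightarrow> (nat \<Rightarrow> int) \<Rightarrow> (nat \<Rightarrow> int \<Rightarrow> nat \<Rightarrow> int)
    \<Rightarrow> (nat \<Rightarrow> int) \<Rightarrow> (nat \<Rightarrow> int) \<Rightarrow> (nat \<Rightarrow> nat \<Rightarrow> int) \<Rightarrow> nat set \<Rightarrow> int" where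
  "recon_output m N mm h c y lam A = (\<Sum>l=1..m. Yrec m N mm h c y lam A l mod mm 0) mod mm 0"

end

theory Submission
  imports Defs
begin

lemma crt_sum:
  fixes mm :: "nat \<Rightarrow> int" and lam r :: "nat \<Rightarrow> int"
  assumes fin: "finite S" and nz: "\<forall>i\<in>S. mm i \<noteq> 0"
    and cop: "\<forall>i\<in>S. \<forall>j\<in>S. i \<noteq> j \<longrightarrow> coprime (mm i) (mm j)"
    and inv: "\<forall>i\<in>S. [lam i * ((\<Prod>j\<in>S. mm j) div mm i) = 1] (mod mm i)"
    and rc: "\<forall>i\<in>S. [r i = Y] (mod mm i)"
  shows "[(\<Sum>i\<in>S. lam i * ((\<Prod>j\<in>S. mm j) div mm i) * r i) = Y] (mod (\<Prod>j\<in>S. mm j))"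
proof (rule cong_cong_prod_coprime)
  show "\<forall>i\<in>S. \<forall>j\<in>S. i \<noteq> j \<longrightarrow> coprime (mm i) (mm j)" by fact
  have dv: "(\<Prod>j\<in>S. mm j) div mm i = (\<Prod>j\<in>S-{i}. mm j)" if "i \<in> S" for i
  proof -
    have "(\<Prod>j\<in>S. mm j) = mm i * (\<Prod>j\<in>S-{i}. mm j)"
      using fin that by (simp add: prod.remove)
    then show ?thesis using nz that by simp
  qed
  show "\<forall>i\<in>S. [(\<Sum>i\<in>S. lam i * ((\<Prod>j\<in>S. mm j) div mm i) * r i) = Y] (mod mm i)"
  proof
    fix k assume k: "k \<in> S"
    have "(\<Sum>i\<in>S. lam i * ((\<Prod>j\<in>S. mm j) div mm i) * r i)
        = lam k * ((\<Prod>j\<in>S. mm j) div mm k) * r k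
          + (\<Sum>i\<in>S-{k}. lam i * ((\<Prod>j\<in>S. mm j) div mm i) * r i)"
      using fin k by (simp add: sum.remove)
    moreover have "mm k dvd (\<Sum>i\<in>S-{k}. lam i * ((\<Prod>j\<in>S. mm j) div mm i) * r i)"
    proof (rule dvd_sum)
      fix i assume i: "i \<in> S - {k}"
      have "mm k dvd (\<Prod>j\<in>S-{i}. mm j)" using fin i k by (intro dvd_prodI) auto
      then show "mm k dvd lam i * ((\<Prod>j\<in>S. mm j) div mm i) * r i"
        using dv[of i] i by simp
    qed
    moreover have "[lam k * ((\<Prod>j\<in>S. mm j) div mm k) * r k = 1 * Y] (mod mm k)"
      using inv rc k by (intro cong_mult) auto
    moreover have "[(\<Sum>i\<in>S-{k}. lam i * ((\<Prod>j\<in>S. mm j) div mm i) * r i) = 0] (mod mm k)"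
      using calculation(2) by (simp add: cong_0_iff)
    ultimately show "[(\<Sum>i\<in>S. lam i * ((\<Prod>j\<in>S. mm j) div mm i) * r i) = Y] (mod mm k)"
      using cong_add by fastforce
  qed
qed

lemma prod_first_le:
  fixes f :: "nat \<Rightarrow> int"
  assumes mono: "\<And>a b. a \<le> b \<Longrightarrow> b \<le> K \<Longrightarrow> f a \<le> f b"
    and pos: "\<And>a. a \<le> K \<Longrightarrow> 1 \<le> f a"
  shows "finite S \<Longrightarrow> S \<subseteq> {1..K} \<Longrightarrow> t \<le> card S \<Longrightarrow> (\<Prod>i=1..t. f i) \<le> (\<Prod>i\<in>S. f i)"
proof (induction t arbitrary: S)
  case 0
  then show ?case using pos by (auto intro!: prod_ge_1)
next
  case (Suc t)
  then have ne: "S \<noteq> {}" by auto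
  define a where "a = Max S"
  have aS: "a \<in> S" using Suc.prems ne a_def by simp
  have sub: "S \<subseteq> {1..a}" using Suc.prems a_def by auto
  have "card S \<le> a" using card_mono[OF _ sub] by simp
  hence ta: "Suc t \<le> a" using Suc.prems by simp
  have aK: "a \<le> K" using aS Suc.prems by auto
  have c: "t \<le> card (S - {a})" using Suc.prems aS by simp
  have ih: "(\<Prod>i=1..t. f i) \<le> (\<Prod>i\<in>S-{a}. f i)"
    using Suc.IH[of "S - {a}"] Suc.prems c by auto
  have p0: "0 \<le> (\<Prod>i=1..t. f i)" using pos Suc.prems ta aK
    by (intro prod_nonneg) (smt (verit) atLeastAtMost_iff le_trans Suc_leD)
  have "(\<Prod>i=1..Suc t. f i) = (\<Prod>i=1..t. f i) * f (Suc t)"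
    by (simp add: prod.nat_ivl_Suc')
  also have "\<dots> \<le> (\<Prod>i\<in>S-{a}. f i) * f a"
    using ih p0 mono[OF ta aK] pos[of "Suc t"] ta aK
    by (intro mult_mono) auto
  also have "\<dots> = (\<Prod>i\<in>S. f i)" using Suc.prems aS by (simp add: prod.remove mult.commute)
  finally show ?case .
qed

theorem mainTheorem4:
  fixes m :: nat and N t :: "nat \<Rightarrow> nat" and mm :: "nat \<Rightarrow> int"
    and k \<theta> :: real and h :: "nat \<Rightarrow> int \<Rightarrow> nat \<Rightarrow> int"
    and s :: int and \<delta> \<alpha> y c :: "nat \<Rightarrow> int"
    and lam :: "nat \<Rightarrow> nat \<Rightarrow> int" and A :: "nat set"
  assumes m_pos: "m \<ge> 1"
    and N0: "N 0 = 0"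
    and N_blocks: "\<forall>l\<in>{1..m}. N (l - 1) < N l"
    and t1: "1 \<le> t 1"
    and t_mono: "\<forall>l\<in>{1..<m}. t l < t (Suc l)"
    and t_le: "\<forall>l\<in>{1..m}. t l \<le> N l"
    and m0_prime: "prime (mm 0)"
    and coprime: "\<forall>i j. i < j \<and> j \<le> N m \<longrightarrow> coprime (mm i) (mm j)"
    and mm_incr: "\<forall>i<N m. mm i < mm (Suc i)"
    and k_ge: "k \<ge> 1" and theta: "0 < \<theta>" "\<theta> < 1"
    and mm_bounds: "\<forall>i\<in>{1..N m}. k * of_int (mm 0) < of_int (mm i)
                        \<and> of_int (mm i) < k * of_int (mm 0) + of_int (mm 0) powr \<theta>"
    and h_distinct: "\<forall>l1\<in>{1..m}. \<forall>l2\<in>{1..m}. l1 \<noteq> l2 \<longrightarrow> h l1 \<noteq> h l2"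
    and h_range: "\<forall>l\<in>{1..m}. \<forall>i\<in>{1..N m}. \<forall>x. 0 \<le> x \<and> x < mm i
                     \<longrightarrow> 0 \<le> h l x l \<and> h l x l < mm i"
    and s_range: "0 \<le> s" "s < mm 0"
    and \<delta>_range: "\<forall>l\<in>{1..m - 1}. 0 \<le> \<delta> l \<and> \<delta> l < mm 0"
    and \<delta>_m: "\<delta> m = (s - (\<Sum>l=1..m - 1. \<delta> l)) mod mm 0"
    and y_def: "\<forall>l\<in>{1..m}. y l = \<delta> l + \<alpha> l * mm 0"
    and y_range: "\<forall>l\<in>{1..m}. 0 \<le> y l \<and> y l < (\<Prod>i=1..t l. mm i)"
    and c_range: "\<forall>i\<in>{1..N (m - 1)}. 0 \<le> c i \<and> c i < mm i"
    and A_acc: "A \<in> Gamma m N t"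
    and lam_inv: "\<forall>l\<in>{1..m}. \<forall>i\<in>A \<inter> {1..N l}.
                    [lam l i * ((\<Prod>j\<in>A \<inter> {1..N l}. mm j) div mm i) = 1] (mod mm i)"
  shows "(\<forall>l\<in>{1..m}. Yrec m N mm h c y lam A l = y l
                  \<and> Yrec m N mm h c y lam A l mod mm 0 = \<delta> l)
         \<and> recon_output m N mm h c y lam A = s"
proof -
  have m0pos: "mm 0 > 1" using m0_prime prime_gt_1_int by blast
  have mm_mono: "mm a \<le> mm b" if "a \<le> b" "b \<le> N m" for a b
    using that
  proof (induction b)
    case 0 then show ?case by simp
  next
    case (Suc b)
    then show ?case using mm_incr by (cases "a = Suc b") (auto, smt (verit) Suc_le_eq le_SucE)
  qed
  have mm_pos: "1 \<le> mm a" if "a \<le> N m" for a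
    using mm_mono[of 0 a] that m0pos by simp
  have Nmono0: "N l \<le> N (l + d)" if "l + d \<le> m" for l d
    using that
  proof (induction d)
    case (Suc d)
    have "N (l + d) < N (l + Suc d)" using N_blocks[rule_format, of "l + Suc d"] Suc.prems by simp
    then show ?case using Suc by simp
  qed simp
  have Nmono: "N l \<le> N m" if "l \<le> m" for l
    using Nmono0[of l "m - l"] that by simp
  have finA: "finite A" and Asub: "A \<subseteq> {1..N m}"
    and Acard: "\<forall>l\<in>{1..m}. t l \<le> card (A \<inter> {1..N l})"
    using A_acc unfolding Gamma_def by (auto intro: finite_subset)
  have Yl: "Yrec m N mm h c y lam A l = y l" if l: "l \<in> {1..m}" for l
  proof -
    define Al where "Al = A \<inter> {1..N l}"
    define M where "M = (\<Prod>j\<in>Al. mm j)"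
    have finAl: "finite Al" unfolding Al_def by simp
    have AlK: "Al \<subseteq> {1..N m}" using Nmono[of l] l unfolding Al_def by auto
    have nz: "\<forall>i\<in>Al. mm i \<noteq> 0" using AlK mm_pos by fastforce
    have cop: "\<forall>i\<in>Al. \<forall>j\<in>Al. i \<noteq> j \<longrightarrow> coprime (mm i) (mm j)"
    proof (intro ballI impI)
      fix i j assume "i \<in> Al" "j \<in> Al" "i \<noteq> j"
      moreover have "i \<le> N m" "j \<le> N m" using AlK \<open>i \<in> Al\<close> \<open>j \<in> Al\<close> by auto
      ultimately show "coprime (mm i) (mm j)" using coprime
        by (metis coprime_commute linorder_neqE_nat)
    qed
    have inv: "\<forall>i\<in>Al. [lam l i * ((\<Prod>j\<in>Al. mm j) div mm i) = 1] (mod mm i)"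
      using lam_inv l unfolding Al_def by blast
    have rc: "\<forall>i\<in>Al. [rshare m N mm h c y i l = y l] (mod mm i)"
    proof
      fix i assume i: "i \<in> Al"
      show "[rshare m N mm h c y i l = y l] (mod mm i)"
      proof (cases "l \<le> m - 1 \<or> i \<le> N (m - 1)")
        case True
        then have "rshare m N mm h c y i l = h l (share m N mm c y i) l
            + (y l - h l (share m N mm c y i) l) mod mm i"
          unfolding rshare_def pubw_def by simp
        moreover have "[h l (share m N mm c y i) l + (y l - h l (share m N mm c y i) l) mod mm i
           = h l (share m N mm c y i) l + (y l - h l (share m N mm c y i) l)] (mod mm i)"
          by (intro cong_add cong_refl) (simp add: cong_def)
        ultimately show ?thesis by simp
      next
        case False
        then have "l = m" using l by auto
        then show ?thesis using False unfolding rshare_def share_def by (simp add: cong_def)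
      qed
    qed
    have cg: "[(\<Sum>i\<in>Al. lam l i * (M div mm i) * rshare m N mm h c y i l) = y l] (mod M)"
      unfolding M_def using crt_sum[OF finAl nz cop inv rc] .
    have "(\<Prod>i=1..t l. mm i) \<le> M" unfolding M_def
      using prod_first_le[of "N m" mm Al "t l"] mm_mono mm_pos finAl AlK Acard l
      unfolding Al_def by blast
    moreover have "0 \<le> y l" "y l < (\<Prod>i=1..t l. mm i)" using y_range l by auto
    ultimately have yr: "0 \<le> y l" "y l < M" by auto
    have "Yrec m N mm h c y lam A l = (\<Sum>i\<in>Al. lam l i * (M div mm i) * rshare m N mm h c y i l) mod M"
      unfolding Yrec_def Al_def M_def Let_def by simp
    also have "\<dots> = y l mod M" using cg by (simp add: cong_def)
    also have "\<dots> = y l" using yr by simp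
    finally show ?thesis .
  qed
  have dl: "y l mod mm 0 = \<delta> l" if l: "l \<in> {1..m}" for l
  proof -
    have "0 \<le> \<delta> l \<and> \<delta> l < mm 0"
    proof (cases "l = m")
      case True then show ?thesis using \<delta>_m m0pos by simp
    next
      case False then show ?thesis using \<delta>_range l by auto
    qed
    then show ?thesis using y_def l by simp
  qed
  have part1: "\<forall>l\<in>{1..m}. Yrec m N mm h c y lam A l = y l
                  \<and> Yrec m N mm h c y lam A l mod mm 0 = \<delta> l"
    using Yl dl by simp
  have "recon_output m N mm h c y lam A = (\<Sum>l=1..m. \<delta> l) mod mm 0"
    unfolding recon_output_def using part1 dl by (intro arg_cong[where f="\<lambda>x. x mod mm 0"] sum.cong) auto
  also have "(\<Sum>l=1..m. \<delta> l) = (\<Sum>l=1..m-1. \<delta> l) + \<delta> m"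
  proof -
    obtain m' where "m = Suc m'" using m_pos by (cases m) auto
    then show ?thesis by simp
  qed
  also have "(\<dots>) mod mm 0 = s mod mm 0" using \<delta>_m by (simp add: mod_add_right_eq)
  also have "\<dots> = s" using s_range by simp
  finally show ?thesis using part1 by blast
qed
end
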